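(* Let $A$ be an $m\times m$ coloring matrix, let $m'\ge1$, and let $A'$ be the $(m+m')\times(m+m')$ block matrix $$A'=\left[\begin{array}{c|c}A&0\\\hline \mathbf{1}&\mathbf{1}\end{array}\right],$$ where the bottom blocks are the $m'\times m$ and $m'\times m'$ all-ones matrices and the upper right block is zero. Then $$F_{A'}(x)=F_A(x)+F_{A'}(x)^2-F_{A'}(x)F_A(x)+m'x,$$ and consequently $$F_{A'}(x)=\frac{1+F_A(x)-\sqrt{(1-F_A(x))^2-4m'x}}{2}.$$
   Context: A plane tree is an unlabeled rooted tree in which the children of every vertex are linearly ordered. A coloring matrix is a square matrix $A=(a_{ij})$ with entries in $\{0,1\}$. An $A$-coloring of a plane tree assigns to each vertex a color (an index of a row of $A$) such that whenever a vertex of color $j$ is a child of a vertex of color $i$, $a_{ij}=1$. Let $t_A(n)$ be the number of pairs (plane tree with $n$ vertices, $A$-coloring of it), and $F_A(x)=\sum_{n\ge1}t_A(n)x^n$ (formal power series; the square root is the formal power series branch with constant term $1$). *)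

theory Defs
  imports "HOL-Computational_Algebra.Formal_Power_Series" "HOL-Library.FuncSet"
begin

datatype ptree = Node "ptree list"

text \<open>Vertices of a plane tree, addressed by paths from the root
  (list of child indices); the parent of vertex p@[i] is p.\<close>
function positions :: "ptree \<Rightarrow> nat list set" where
  "positions (Node ts) = insert [] (\<Union>i<length ts. (Cons i) ` positions (ts ! i))"
  by pat_completeness auto
termination
  by (relation "measure size") (auto intro!: size_list_estimation' nth_mem simp: less_Suc_eq_le)

definition num_vertices :: "ptree \<Rightarrow> nat" where
  "num_vertices T = card (positions T)"

text \<open>A coloring matrix of size m is A :: nat \<Rightarrow> nat \<Rightarrow> nat with entries in {0,1}
  on the index range {..<m}.\<close>
definition is_coloring :: "(nat \<Rightarrow> nat \<Rightarrow> nat) \<Rightarrow> nat \<Rightarrow> ptree \<Rightarrow> (nat list \<Rightarrow> nat) \<Rightarrow> bool" where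
  "is_coloring A m T c \<longleftrightarrow>
     c \<in> extensional (positions T) \<and>
     (\<forall>p\<in>positions T. c p < m) \<and>
     (\<forall>p i. p @ [i] \<in> positions T \<longrightarrow> A (c p) (c (p @ [i])) = 1)"

definition t_count :: "(nat \<Rightarrow> nat \<Rightarrow> nat) \<Rightarrow> nat \<Rightarrow> nat \<Rightarrow> nat" where
  "t_count A m n = card {(T, c). num_vertices T = n \<and> is_coloring A m T c}"

definition F_gen :: "(nat \<Rightarrow> nat \<Rightarrow> nat) \<Rightarrow> nat \<Rightarrow> real fps" where
  "F_gen A m = Abs_fps (\<lambda>n. if n = 0 then 0 else of_nat (t_count A m n))"

definition block_ext :: "(nat \<Rightarrow> nat \<Rightarrow> nat) \<Rightarrow> nat \<Rightarrow> nat \<Rightarrow> nat \<Rightarrow> nat" where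
  "block_ext A m i j = (if i < m then (if j < m then A i j else 0) else 1)"

end

theory Submission
  imports Defs
begin


datatype ctree = CN nat "ctree list"

fun croot where "croot (CN r ts) = r"
fun csize where "csize (CN r ts) = Suc (sum_list (map csize ts))"
fun cvalid :: "(nat \<Rightarrow> nat \<Rightarrow> nat) \<Rightarrow> nat \<Rightarrow> ctree \<Rightarrow> bool" where
  "cvalid B k (CN r ts) = (r < k \<and> (\<forall>t\<in>set ts. cvalid B k t \<and> B r (croot t) = 1))"
fun shape where "shape (CN r ts) = Node (map shape ts)"
function col :: "ctree \<Rightarrow> nat list \<Rightarrow> nat" where
  "col (CN r ts) [] = r"
| "col (CN r ts) (i#q) = (if i < length ts then col (ts!i) q else undefined)"
  by pat_completeness auto
termination
  by (relation "measure (size o fst)") (auto intro!: size_list_estimation' nth_mem simp: less_Suc_eq_le)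

lemma col_root: "col t [] = croot t" by (cases t) auto

lemma Cons_in_positions: "(i#p \<in> positions (Node ts)) = (i < length ts \<and> p \<in> positions (ts!i))"
  by auto

lemma Nil_in_positions: "[] \<in> positions T" by (cases T) auto

lemma finite_positions: "finite (positions T)"
  by (induction T) auto

lemma num_vertices_Node: "num_vertices (Node ts) = Suc (sum_list (map num_vertices ts))"
proof -
  have "card (\<Union>i<length ts. (Cons i) ` positions (ts ! i)) = (\<Sum>i<length ts. card ((Cons i) ` positions (ts ! i)))"
    by (rule card_UN_disjoint) (auto simp: finite_positions)
  also have "\<dots> = (\<Sum>i<length ts. num_vertices (ts!i))"
    by (rule sum.cong) (auto simp: card_image num_vertices_def)
  also have "\<dots> = sum_list (map num_vertices ts)"
    by (simp add: sum_list_sum_nth atLeast0LessThan)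
  moreover have "finite (\<Union>i<length ts. (Cons i) ` positions (ts ! i))"
    by (simp add: finite_positions)
  moreover have "[] \<notin> (\<Union>i<length ts. (Cons i) ` positions (ts ! i))" by auto
  ultimately show ?thesis
    unfolding num_vertices_def positions.simps by (subst card_insert_disjoint) auto
qed

lemma nv_shape: "num_vertices (shape t) = csize t"
  by (induction t) (simp add: num_vertices_Node o_def cong: map_cong)

lemma valid_coloring: "cvalid B k t \<Longrightarrow> is_coloring B k (shape t) (col t)"
proof (induction t)
  case (CN r ts)
  have ih: "\<And>i. i < length ts \<Longrightarrow> is_coloring B k (shape (ts!i)) (col (ts!i))"
    using CN by auto
  show ?case unfolding is_coloring_def
  proof (intro conjI allI impI ballI)
    show "col (CN r ts) \<in> extensional (positions (shape (CN r ts)))"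
      unfolding extensional_def
    proof (intro CollectI allI impI)
      fix p assume np: "p \<notin> positions (shape (CN r ts))"
      show "col (CN r ts) p = undefined"
      proof (cases p)
        case (Cons a q)
        show ?thesis
        proof (cases "a < length ts")
          case True
          then have "q \<notin> positions (shape (ts!a))" using np Cons by auto
          then show ?thesis using ih[OF True] Cons True by (auto simp: is_coloring_def extensional_def)
        qed (use Cons in simp)
      qed (use np Nil_in_positions in auto)
    qed
  next
    fix p assume "p \<in> positions (shape (CN r ts))"
    then show "col (CN r ts) p < k"
      using ih CN.prems by (cases p) (auto simp: is_coloring_def)
  next
    fix p i assume a: "p @ [i] \<in> positions (shape (CN r ts))"
    show "B (col (CN r ts) p) (col (CN r ts) (p @ [i])) = 1"
    proof (cases p)
      case Nil
      then show ?thesis using a CN.prems by (auto simp: col_root)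
    next
      case (Cons j q)
      then show ?thesis using a ih[of j] by (auto simp: is_coloring_def)
    qed
  qed
qed

lemma shape_col_inj: "shape s = shape t \<Longrightarrow> col s = col t \<Longrightarrow> s = t"
proof (induction s arbitrary: t)
  case (CN r ss)
  obtain r' ts where t: "t = CN r' ts" by (cases t)
  have "r = r'" using fun_cong[OF CN.prems(2), of "[]"] t by simp
  have len: "length ss = length ts" using CN.prems(1) t
    by (metis ctree.inject length_map ptree.inject shape.simps)
  have "ss ! i = ts ! i" if "i < length ss" for i
  proof -
    have "shape (ss!i) = shape (ts!i)" using CN.prems(1) t that len
      by (metis nth_map ptree.inject shape.simps)
    moreover have "col (ss!i) = col (ts!i)"
    proof
      fix q show "col (ss!i) q = col (ts!i) q"
        using fun_cong[OF CN.prems(2), of "i#q"] t that len by simp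
    qed
    ultimately show ?thesis using CN.IH that by auto
  qed
  then show ?case using t \<open>r = r'\<close> len by (simp add: nth_equalityI)
qed

lemma coloring_surj: "is_coloring B k T c \<Longrightarrow> \<exists>t. cvalid B k t \<and> shape t = T \<and> col t = c"
proof (induction T arbitrary: c)
  case (Node ts)
  note col = Node.prems[unfolded is_coloring_def]
  have ext: "c \<in> extensional (positions (Node ts))" using col by blast
  have bnd: "\<And>p. p \<in> positions (Node ts) \<Longrightarrow> c p < k" using col by blast
  have edge: "\<And>p j. p @ [j] \<in> positions (Node ts) \<Longrightarrow> B (c p) (c (p @ [j])) = 1" using col by blast
  define P where "P i t \<longleftrightarrow> cvalid B k t \<and> shape t = ts!i \<and> col t = (\<lambda>p. c (i#p))" for i t
  have ex: "\<exists>t. P i t" if i: "i < length ts" for i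
  proof -
    have "is_coloring B k (ts!i) (\<lambda>p. c (i#p))"
      unfolding is_coloring_def
    proof (intro conjI allI impI ballI)
      show "(\<lambda>p. c (i # p)) \<in> extensional (positions (ts ! i))"
        unfolding extensional_def
      proof (intro CollectI allI impI)
        fix p assume "p \<notin> positions (ts!i)"
        then have "i#p \<notin> positions (Node ts)" by (simp add: Cons_in_positions del: positions.simps)
        then show "c (i#p) = undefined" by (rule extensional_arb[OF ext])
      qed
    next
      fix p assume "p \<in> positions (ts!i)"
      then have "i#p \<in> positions (Node ts)" using i by (simp add: Cons_in_positions del: positions.simps)
      then show "c (i#p) < k" by (rule bnd)
    next
      fix p j assume "p @ [j] \<in> positions (ts!i)"
      then have "(i#p) @ [j] \<in> positions (Node ts)" using i
        by (simp add: Cons_in_positions del: positions.simps)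
      then have "B (c (i#p)) (c ((i#p) @ [j])) = 1" by (rule edge)
      then show "B (c (i#p)) (c (i#p @ [j])) = 1" by simp
    qed
    from Node.IH[OF nth_mem[OF i] this] show ?thesis unfolding P_def by blast
  qed
  define us where "us = map (\<lambda>i. SOME t. P i t) [0..<length ts]"
  have us: "P i (us!i)" if "i < length ts" for i
    using someI_ex[OF ex[OF that]] that unfolding us_def by simp
  have lus: "length us = length ts" unfolding us_def by simp
  have c0: "c [] < k" by (rule bnd[OF Nil_in_positions])
  have valid: "cvalid B k (CN (c []) us)"
  proof -
    have "cvalid B k u \<and> B (c []) (croot u) = 1" if uin: "u \<in> set us" for u
    proof -
      obtain i where i: "i < length ts" "u = us!i" using uin lus by (auto simp: in_set_conv_nth)
      have pu: "cvalid B k u" "col u = (\<lambda>p. c (i#p))" using us[OF i(1)] i(2) unfolding P_def by auto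
      have "croot u = c [i]" using col_root[of u] pu(2) by simp
      moreover have "[] @ [i] \<in> positions (Node ts)" using i(1) Nil_in_positions
        by (simp add: Cons_in_positions del: positions.simps)
      then have "B (c []) (c ([] @ [i])) = 1" by (rule edge)
      ultimately show ?thesis using pu by simp
    qed
    then show ?thesis using c0 by simp
  qed
  have "shape (CN (c []) us) = Node ts"
    using us lus by (auto simp: P_def intro!: nth_equalityI)
  moreover have "col (CN (c []) us) = c"
  proof
    fix p show "col (CN (c []) us) p = c p"
    proof (cases p)
      case (Cons i q)
      show ?thesis
      proof (cases "i < length ts")
        case True then show ?thesis using us[OF True] lus Cons by (simp add: P_def)
      next
        case False
        then have "p \<notin> positions (Node ts)" using Cons by (simp add: Cons_in_positions del: positions.simps)
        then have "c p = undefined" by (rule extensional_arb[OF ext])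
        then show ?thesis using False lus Cons by simp
      qed
    qed simp
  qed
  ultimately show ?case using valid by blast
qed

definition CT where "CT B k n = {t. cvalid B k t \<and> csize t = n}"

lemma t_count_CT: "t_count B k n = card (CT B k n)"
proof -
  have "{(T, c). num_vertices T = n \<and> is_coloring B k T c} = (\<lambda>t. (shape t, col t)) ` CT B k n"
  proof (intro equalityI subsetI)
    fix x assume "x \<in> {(T, c). num_vertices T = n \<and> is_coloring B k T c}"
    then obtain T c where x: "x = (T,c)" "num_vertices T = n" "is_coloring B k T c" by auto
    then obtain t where "cvalid B k t \<and> shape t = T \<and> col t = c" using coloring_surj by blast
    then show "x \<in> (\<lambda>t. (shape t, col t)) ` CT B k n" using x nv_shape[of t]
      by (auto simp: CT_def)
  next
    fix x assume "x \<in> (\<lambda>t. (shape t, col t)) ` CT B k n"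
    then show "x \<in> {(T, c). num_vertices T = n \<and> is_coloring B k T c}"
      by (auto simp: CT_def nv_shape valid_coloring)
  qed
  moreover have "inj_on (\<lambda>t. (shape t, col t)) (CT B k n)"
    by (auto intro!: inj_onI shape_col_inj)
  ultimately show ?thesis unfolding t_count_def by (simp add: card_image)
qed


unbundle fps_syntax


lemma csize_pos: "csize t \<ge> 1" by (cases t) auto

lemma length_le_sum: "length ts \<le> sum_list (map csize ts)"
proof (induction ts)
  case (Cons a ts)
  have "1 \<le> csize a" by (rule csize_pos)
  then show ?case using Cons by simp
qed simp

lemma finite_le: "finite {t. cvalid B k t \<and> csize t \<le> n}"
proof (induction n)
  case 0
  have e: "{t. cvalid B k t \<and> csize t \<le> 0} = {}"
  proof (intro equalityI subsetI)
    fix t assume "t \<in> {t. cvalid B k t \<and> csize t \<le> 0}"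
    then have "csize t \<le> 0" by simp
    then show "t \<in> {}" using csize_pos[of t] by simp
  qed simp
  show ?case by (simp only: e finite.emptyI)
next
  case (Suc n)
  let ?S = "{t. cvalid B k t \<and> csize t \<le> n}"
  have "{t. cvalid B k t \<and> csize t \<le> Suc n} \<subseteq>
        (\<lambda>(r,ts). CN r ts) ` ({..<k} \<times> {ts. set ts \<subseteq> ?S \<and> length ts \<le> n})"
  proof
    fix t assume t: "t \<in> {t. cvalid B k t \<and> csize t \<le> Suc n}"
    obtain r ts where tt: "t = CN r ts" by (cases t)
    have s: "sum_list (map csize ts) \<le> n" using t tt by simp
    have "set ts \<subseteq> ?S"
    proof
      fix u assume "u \<in> set ts"
      then have "csize u \<le> sum_list (map csize ts)" by (simp add: member_le_sum_list)
      then show "u \<in> ?S" using t tt s \<open>u \<in> set ts\<close> by auto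
    qed
    moreover have "length ts \<le> n" using length_le_sum[of ts] s by simp
    ultimately show "t \<in> (\<lambda>(r,ts). CN r ts) ` ({..<k} \<times> {ts. set ts \<subseteq> ?S \<and> length ts \<le> n})"
      using t tt by auto
  qed
  moreover have "finite ({..<k} \<times> {ts. set ts \<subseteq> ?S \<and> length ts \<le> n})"
    using Suc by (simp add: finite_lists_length_le)
  ultimately show ?case by (meson finite_imageI finite_subset)
qed

lemma finite_CT: "finite (CT B k n)"
  by (rule finite_subset[OF _ finite_le[of B k n]]) (auto simp: CT_def)

lemma CT_0: "CT B k 0 = {}"
proof -
  have "csize t \<noteq> 0" for t using csize_pos[of t] by simp
  then show ?thesis by (simp add: CT_def)
qed

lemma cvalid_root: "cvalid B k t \<Longrightarrow> croot t < k" by (cases t) auto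

lemma old_valid:
  assumes "m \<le> K"
  shows "(cvalid (block_ext A m) K t \<and> croot t < m) = cvalid A m t"
proof (induction t)
  case (CN r ts)
  show ?case
  proof
    assume a: "cvalid (block_ext A m) K (CN r ts) \<and> croot (CN r ts) < m"
    have "cvalid A m s \<and> A r (croot s) = 1" if "s \<in> set ts" for s
    proof -
      have "cvalid (block_ext A m) K s" "block_ext A m r (croot s) = 1" using a that by auto
      then have "croot s < m" "A r (croot s) = 1" using a by (auto simp: block_ext_def split: if_splits)
      then show ?thesis using CN.IH that \<open>cvalid (block_ext A m) K s\<close> by blast
    qed
    then show "cvalid A m (CN r ts)" using a by simp
  next
    assume a: "cvalid A m (CN r ts)"
    have "cvalid (block_ext A m) K s \<and> block_ext A m r (croot s) = 1" if "s \<in> set ts" for s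
    proof -
      have "cvalid A m s" "A r (croot s) = 1" using a that by auto
      moreover have "croot s < m" using cvalid_root[OF \<open>cvalid A m s\<close>] .
      moreover have "cvalid (block_ext A m) K s" using CN.IH[OF that] \<open>cvalid A m s\<close> by blast
      moreover have "r < m" using a by simp
      ultimately show ?thesis by (simp add: block_ext_def)
    qed
    then show "cvalid (block_ext A m) K (CN r ts) \<and> croot (CN r ts) < m" using a assms by auto
  qed
qed

definition HT where "HT A m K n = {t. cvalid (block_ext A m) K t \<and> csize t = n \<and> m \<le> croot t}"

lemma CT_split:
  assumes "m \<le> K"
  shows "card (CT (block_ext A m) K n) = card (CT A m n) + card (HT A m K n)"
proof -
  have "CT (block_ext A m) K n = CT A m n \<union> HT A m K n"
  proof (intro equalityI subsetI)
    fix t assume "t \<in> CT (block_ext A m) K n"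
    then show "t \<in> CT A m n \<union> HT A m K n"
      using old_valid[OF assms, of A t] by (cases "croot t < m") (auto simp: CT_def HT_def)
  next
    fix t assume "t \<in> CT A m n \<union> HT A m K n"
    then show "t \<in> CT (block_ext A m) K n"
      using old_valid[OF assms, of A t] by (auto simp: CT_def HT_def)
  qed
  moreover have "CT A m n \<inter> HT A m K n = {}"
    using cvalid_root by (force simp: CT_def HT_def)
  moreover have "finite (HT A m K n)"
    by (rule finite_subset[OF _ finite_CT[of "block_ext A m" K n]]) (auto simp: CT_def HT_def)
  ultimately show ?thesis by (simp add: card_Un_disjoint finite_CT)
qed

fun cc where "cc (s, CN r ts) = CN r (s#ts)"

lemma cc_inj: "inj cc"
proof (rule injI)
  fix x y assume "cc x = cc y"
  then show "x = y"
  proof -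
    obtain s1 t1 s2 t2 where x: "x = (s1, t1)" and y: "y = (s2, t2)" by (cases x, cases y)
    obtain r1 ts1 r2 ts2 where "t1 = CN r1 ts1" "t2 = CN r2 ts2" by (cases t1, cases t2)
    then show ?thesis using \<open>cc x = cc y\<close> x y by simp
  qed
qed

lemma HT_rec:
  "HT A m K n = (if n = 1 then (\<lambda>r. CN r []) ` {m..<K} else {}) \<union>
     (\<Union>k\<in>{0..n}. cc ` (CT (block_ext A m) K k \<times> HT A m K (n-k)))"
proof (intro equalityI subsetI)
  fix t assume t: "t \<in> HT A m K n"
  obtain r ts where tt: "t = CN r ts" by (cases t)
  show "t \<in> (if n = 1 then (\<lambda>r. CN r []) ` {m..<K} else {}) \<union>
     (\<Union>k\<in>{0..n}. cc ` (CT (block_ext A m) K k \<times> HT A m K (n-k)))"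
  proof (cases ts)
    case Nil
    have "n = 1" "r \<in> {m..<K}" using t tt Nil by (auto simp: HT_def)
    then have "t \<in> (if n = 1 then (\<lambda>r. CN r []) ` {m..<K} else {})" using tt Nil by simp
    then show ?thesis by (rule UnI1)
  next
    case (Cons s ts')
    have 1: "t = cc (s, CN r ts')" using tt Cons by simp
    have 2: "csize s \<le> n" "csize (CN r ts') = n - csize s"
      using t tt Cons by (auto simp: HT_def)
    have 3: "s \<in> CT (block_ext A m) K (csize s)" using t tt Cons by (auto simp: HT_def CT_def)
    have 4: "CN r ts' \<in> HT A m K (n - csize s)" using t tt Cons 2
      by (auto simp: HT_def)
    have "t \<in> cc ` (CT (block_ext A m) K (csize s) \<times> HT A m K (n - csize s))"
      by (rule image_eqI[where x="(s, CN r ts')" and f=cc]) (simp_all add: 1 3 4)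
    then have "t \<in> (\<Union>k\<in>{0..n}. cc ` (CT (block_ext A m) K k \<times> HT A m K (n-k)))"
      using 2(1) by (intro UN_I[of "csize s"]) auto
    then show ?thesis by (rule UnI2)
  qed
next
  fix t assume t: "t \<in> (if n = 1 then (\<lambda>r. CN r []) ` {m..<K} else {}) \<union>
     (\<Union>k\<in>{0..n}. cc ` (CT (block_ext A m) K k \<times> HT A m K (n-k)))"
  then show "t \<in> HT A m K n"
  proof (rule UnE)
    assume "t \<in> (if n = 1 then (\<lambda>r. CN r []) ` {m..<K} else {})"
    then obtain r where "n = 1" "r \<in> {m..<K}" "t = CN r []" by (auto split: if_splits)
    then show ?thesis by (simp add: HT_def)
  next
    assume "t \<in> (\<Union>k\<in>{0..n}. cc ` (CT (block_ext A m) K k \<times> HT A m K (n-k)))"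
    then obtain k p where k: "k \<le> n" "p \<in> CT (block_ext A m) K k \<times> HT A m K (n-k)" "t = cc p"
      by auto
    obtain s u where p: "p = (s, u)" by (cases p)
    obtain r ts where u: "u = CN r ts" by (cases u)
    have "s \<in> CT (block_ext A m) K k" "CN r ts \<in> HT A m K (n-k)" "t = CN r (s#ts)"
      using k p u by auto
    then show ?thesis using k(1) by (auto simp: HT_def CT_def block_ext_def)
  qed
qed

lemma finite_HT: "finite (HT A m K n)"
  by (rule finite_subset[OF _ finite_CT[of "block_ext A m" K n]]) (auto simp: CT_def HT_def)

lemma card_HT:
  "card (HT A m (m + m') n) = (if n = 1 then m' else 0) +
     (\<Sum>k\<in>{0..n}. card (CT (block_ext A m) (m+m') k) * card (HT A m (m+m') (n-k)))"
proof -
  let ?K = "m + m'"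
  let ?L = "(if n = 1 then (\<lambda>r. CN r []) ` {m..<?K} else {})"
  let ?X = "\<lambda>k. CT (block_ext A m) ?K k \<times> HT A m ?K (n-k)"
  have fin: "finite (cc ` ?X k)" for k by (simp add: finite_CT finite_HT)
  have cardX: "card (cc ` ?X k) = card (CT (block_ext A m) ?K k) * card (HT A m ?K (n-k))" for k
    by (simp add: card_image[OF inj_on_subset[OF cc_inj]] card_cartesian_product)
  have disj: "cc ` ?X i \<inter> cc ` ?X j = {}" if "i \<noteq> j" for i j
  proof -
    have "?X i \<inter> ?X j = {}" using that by (auto simp: CT_def)
    then show ?thesis by (simp add: image_Int[OF cc_inj, symmetric])
  qed
  have cardU: "card (\<Union>k\<in>{0..n}. cc ` ?X k) = (\<Sum>k\<in>{0..n}. card (cc ` ?X k))"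
    by (rule card_UN_disjoint) (use fin disj in auto)
  have cardL: "card ?L = (if n = 1 then m' else 0)"
    by (simp add: card_image inj_on_def)
  have "?L \<inter> (\<Union>k\<in>{0..n}. cc ` ?X k) = {}"
  proof -
    have "CN r [] \<noteq> cc p" for r p
    proof -
      obtain s u where p: "p = (s, u)" by (cases p)
      obtain r' ts where u: "u = CN r' ts" by (cases u)
      show ?thesis using p u by simp
    qed
    then show ?thesis by auto
  qed
  then have "card (HT A m ?K n) = card ?L + card (\<Union>k\<in>{0..n}. cc ` ?X k)"
    by (subst HT_rec) (rule card_Un_disjoint, auto simp: fin)
  then show ?thesis using cardU cardL cardX by simp
qed

lemma F_gen_nth: "F_gen B k $ n = real (card (CT B k n))"
  by (simp add: F_gen_def t_count_CT CT_0)

lemma fpsX_nth: "(fps_const (c::real) * fps_X) $ n = (if n = 1 then c else 0)"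
proof -
  have "fps_const c * fps_X = fps_X * fps_const c" by (simp add: mult.commute)
  then show ?thesis by (cases n) auto
qed

theorem theorem26:
  fixes A :: "nat \<Rightarrow> nat \<Rightarrow> nat" and m m' :: nat
  assumes "\<forall>i<m. \<forall>j<m. A i j \<in> {0, 1}"
    and "m' \<ge> 1"
  shows "F_gen (block_ext A m) (m + m') =
           F_gen A m + F_gen (block_ext A m) (m + m') ^ 2
           - F_gen (block_ext A m) (m + m') * F_gen A m + fps_const (real m') * fps_X \<and>
         F_gen (block_ext A m) (m + m') =
           fps_const (1/2) * (1 + F_gen A m
             - fps_radical (\<lambda>k x. root k x) 2 ((1 - F_gen A m) ^ 2 - fps_const (4 * real m') * fps_X))"
proof -
  define F where "F = F_gen A m"
  define G where "G = F_gen (block_ext A m) (m + m')"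
  define H where "H = Abs_fps (\<lambda>n. real (card (HT A m (m + m') n)))"
  define c where "c = fps_const (real m') * fps_X"
  have GFH: "G = F + H"
  proof (rule fps_ext)
    fix n show "G $ n = (F + H) $ n"
      unfolding G_def F_def H_def using CT_split[of m "m + m'" A n]
      by (simp add: F_gen_nth)
  qed
  have HGH: "H = c + G * H"
  proof (rule fps_ext)
    fix n
    have "(G * H) $ n = (\<Sum>k=0..n. G $ k * H $ (n - k))" by (rule fps_mult_nth)
    also have "\<dots> = real (\<Sum>k\<in>{0..n}. card (CT (block_ext A m) (m+m') k) * card (HT A m (m+m') (n-k)))"
      unfolding G_def H_def by (simp add: F_gen_nth)
    finally show "H $ n = (c + G * H) $ n"
      unfolding c_def using card_HT[of A m m' n]
      by (simp add: fpsX_nth H_def)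
  qed
  have eq1: "G = F + G^2 - G * F + c"
  proof -
    have "G = F + H" by (rule GFH)
    also have "H = c + G * H" by (rule HGH)
    also have "H = G - F" using GFH by simp
    finally show ?thesis by (simp add: algebra_simps power2_eq_square)
  qed
  define D where "D = (1 - F) ^ 2 - fps_const (4 * real m') * fps_X"
  define a where "a = 1 + F - 2 * G"
  have F0: "F $ 0 = 0" unfolding F_def by (simp add: F_gen_def)
  have G0: "G $ 0 = 0" unfolding G_def by (simp add: F_gen_def)
  have c4: "fps_const (4 * real m') * fps_X = 4 * c"
    unfolding c_def by (simp add: numeral_fps_const)
  have "a ^ 2 - D = 4 * (G ^ 2 - G * F + F + c - G)"
    unfolding a_def D_def c4 by (simp add: algebra_simps power2_eq_square)
  also have "G ^ 2 - G * F + F + c - G = 0" using eq1 by (simp add: algebra_simps)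
  finally have aD0: "a ^ 2 = D" by simp
  have aD: "a ^ Suc 1 = D" using aD0 by (simp only: Suc_1)
  have D0: "D $ 0 = 1" unfolding D_def using F0 by (simp add: power2_eq_square)
  have a0: "a $ 0 = 1" unfolding a_def using F0 G0 by simp
  have "a = fps_radical (\<lambda>k x. root k x) (Suc 1) D"
    using radical_unique[of "\<lambda>k x. root k x" 1 D a] D0 a0 aD by simp
  then have arad: "a = fps_radical (\<lambda>k x. root k x) 2 D" by (simp only: Suc_1)
  have "fps_const (1/2) * (1 + F - a) = fps_const (1/2) * (2 * G)"
    unfolding a_def by simp
  also have "\<dots> = G" by (simp add: numeral_fps_const)
  finally have eq2: "G = fps_const (1/2) * (1 + F - fps_radical (\<lambda>k x. root k x) 2 D)"
    using arad by simp
  show ?thesis using eq1 eq2 unfolding F_def G_def c_def D_def by blast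
qed


end
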